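(* Let $\mathcal{L}=(L,\wedge,\vee,0,1)$ be a complete lattice in which $0$ is cocompact, and let $p\in L$ with $\Omega(p)\neq\emptyset$. Then $p$ is strongly irreducible in $L$ if and only if $p$ is a pseudo-complement of an atom $a$ of $L$. In this case every element of $L$ is comparable to $a$ or to $p$.
   Context: $p$ is strongly irreducible if for all $a,b\in L$: $a\wedge b\leq p$ implies $a\leq p$ or $b\leq p$. $\Omega(p)=\{x\in L\setminus\{0\}\mid p\wedge x=0\}$. An element $c$ is cocompact if whenever $\bigwedge A\leq c$ for a subset $A\subseteq L$ there is a finite $A'\subseteq A$ with $\bigwedge A'\leq c$. An atom is an element $a\neq 0$ with $[0,a]=\{0,a\}$. A pseudo-complement of $a$ is the greatest $x\in L$ with $a\wedge x=0$. *)

theory Defs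
  imports Main
begin

definition strongly_irreducible :: "'a::complete_lattice \<Rightarrow> bool" where
  "strongly_irreducible p \<longleftrightarrow> (\<forall>a b. inf a b \<le> p \<longrightarrow> a \<le> p \<or> b \<le> p)"

definition Omega :: "'a::complete_lattice \<Rightarrow> 'a set" where
  "Omega p = {x. x \<noteq> bot \<and> inf p x = bot}"

definition cocompact :: "'a::complete_lattice \<Rightarrow> bool" where
  "cocompact c \<longleftrightarrow> (\<forall>A. Inf A \<le> c \<longrightarrow> (\<exists>A'. A' \<subseteq> A \<and> finite A' \<and> Inf A' \<le> c))"

definition atom :: "'a::complete_lattice \<Rightarrow> bool" where
  "atom a \<longleftrightarrow> a \<noteq> bot \<and> {x. bot \<le> x \<and> x \<le> a} = {bot, a}"

definition pseudo_complement :: "'a::complete_lattice \<Rightarrow> 'a \<Rightarrow> bool" where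
  "pseudo_complement a x \<longleftrightarrow> inf a x = bot \<and> (\<forall>y. inf a y = bot \<longrightarrow> y \<le> x)"

definition comparable :: "'a::order \<Rightarrow> 'a \<Rightarrow> bool" where
  "comparable x y \<longleftrightarrow> x \<le> y \<or> y \<le> x"

end

theory Submission
  imports Defs
begin

lemma si_meet_closed:
  fixes p :: "'a::complete_lattice"
  assumes si: "strongly_irreducible p"
    and y: "y \<in> Omega p" and z: "z \<in> Omega p"
  shows "inf y z \<in> Omega p"
proof -
  have y0: "y \<noteq> bot" "inf p y = bot" and z0: "z \<noteq> bot" "inf p z = bot"
    using y z by (auto simp: Omega_def)
  have "\<not> y \<le> p"
  proof
    assume "y \<le> p" then have "inf p y = y" by (simp add: inf_absorb2)
    with y0 show False by simp
  qed
  moreover have "\<not> z \<le> p"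
  proof
    assume "z \<le> p" then have "inf p z = z" by (simp add: inf_absorb2)
    with z0 show False by simp
  qed
  ultimately have "\<not> inf y z \<le> p" using si by (auto simp: strongly_irreducible_def)
  then have "inf y z \<noteq> bot" by auto
  moreover have "inf p (inf y z) = bot"
    by (metis y0(2) inf.assoc inf_bot_left)
  ultimately show ?thesis by (simp add: Omega_def)
qed

lemma si_finite_Inf:
  fixes p :: "'a::complete_lattice"
  assumes si: "strongly_irreducible p"
  shows "finite A \<Longrightarrow> A \<noteq> {} \<Longrightarrow> A \<subseteq> Omega p \<Longrightarrow> Inf A \<in> Omega p"
proof (induction A rule: finite_ne_induct)
  case (singleton x) then show ?case by simp
next
  case (insert x F)
  then show ?case using si_meet_closed[OF si] by simp
qed

theorem corollary1p17:
  fixes p :: "'a::complete_lattice"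
  assumes "cocompact (bot :: 'a)"
    and "Omega p \<noteq> {}"
  shows "(strongly_irreducible p \<longleftrightarrow> (\<exists>a. atom a \<and> pseudo_complement a p))
    \<and> (strongly_irreducible p \<longrightarrow> (\<forall>a. atom a \<and> pseudo_complement a p \<longrightarrow>
          (\<forall>x. comparable x a \<or> comparable x p)))"
proof -
  have atom_inf: "inf a x = bot \<or> a \<le> x" if "atom a" for a x :: 'a
  proof -
    have "inf a x \<in> {y. bot \<le> y \<and> y \<le> a}" by simp
    with that have "inf a x = bot \<or> inf a x = a" by (auto simp: atom_def)
    then show ?thesis by (metis inf.absorb_iff1)
  qed
  have bwd: "strongly_irreducible p" if "atom a" "pseudo_complement a p" for a
    unfolding strongly_irreducible_def
  proof (intro allI impI)
    fix x y assume xy: "inf x y \<le> p"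
    show "x \<le> p \<or> y \<le> p"
    proof (rule ccontr)
      assume "\<not> (x \<le> p \<or> y \<le> p)"
      then have "a \<le> x" "a \<le> y" using atom_inf[OF that(1)] that(2)
        by (auto simp: pseudo_complement_def)
      then have "a \<le> inf x y" by simp
      then have "a \<le> p" using xy by (rule order_trans)
      then have "inf a p = a" by (simp add: inf_absorb1)
      then show False using that by (auto simp: pseudo_complement_def atom_def)
    qed
  qed
  have fwd: "\<exists>a. atom a \<and> pseudo_complement a p" if si: "strongly_irreducible p"
  proof -
    obtain x0 where x0: "x0 \<in> Omega p" using assms(2) by auto
    define a where "a = Inf (Omega p)"
    have "a \<noteq> bot"
    proof
      assume "a = bot"
      then have "Inf (Omega p) \<le> bot" by (simp add: a_def)
      then obtain A' where A': "A' \<subseteq> Omega p" "finite A'" "Inf A' \<le> bot"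
        using assms(1) unfolding cocompact_def by blast
      show False
      proof (cases "A' = {}")
        case True
        then have "(top::'a) = bot" using A' by (simp add: bot_unique)
        moreover have "x0 \<le> top" by simp
        ultimately have "x0 = bot" using bot_unique by auto
        then show False using x0 by (simp add: Omega_def)
      next
        case False
        then have "Inf A' \<in> Omega p" using si_finite_Inf[OF si] A' by blast
        then show False using A' by (simp add: Omega_def bot_unique)
      qed
    qed
    have ax: "a \<le> x0" unfolding a_def using x0 by (rule Inf_lower)
    have "inf p a \<le> inf p x0" using ax by (rule inf_mono[OF order_refl])
    moreover have "inf p x0 = bot" using x0 by (simp add: Omega_def)
    ultimately have pa: "inf p a = bot" using bot_unique by metis
    have aO: "a \<in> Omega p" using \<open>a \<noteq> bot\<close> pa by (simp add: Omega_def)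
    have "atom a" unfolding atom_def
    proof (intro conjI)
      show "a \<noteq> bot" by fact
      show "{x. bot \<le> x \<and> x \<le> a} = {bot, a}"
      proof (intro equalityI subsetI)
        fix y assume "y \<in> {x. bot \<le> x \<and> x \<le> a}"
        then have ya: "y \<le> a" by simp
        show "y \<in> {bot, a}"
        proof (cases "y = bot")
          case False
          have "inf p y \<le> inf p a" using ya by (rule inf_mono[OF order_refl])
          then have "inf p y = bot" using pa by (simp add: bot_unique)
          then have "y \<in> Omega p" using False by (simp add: Omega_def)
          then have "a \<le> y" unfolding a_def by (rule Inf_lower)
          then show ?thesis using ya by auto
        qed simp
      qed auto
    qed
    moreover have "pseudo_complement a p" unfolding pseudo_complement_def
    proof (intro conjI allI impI)
      show "inf a p = bot" using pa by (simp add: inf_commute)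
      fix y assume "inf a y = bot"
      then have "a \<le> p \<or> y \<le> p" using si by (auto simp: strongly_irreducible_def)
      moreover have "\<not> a \<le> p"
      proof
        assume "a \<le> p" then have "inf p a = a" by (simp add: inf_absorb2)
        with pa \<open>a \<noteq> bot\<close> show False by simp
      qed
      ultimately show "y \<le> p" by simp
    qed
    ultimately show ?thesis by blast
  qed
  have comp: "comparable x a \<or> comparable x p" if "atom a" "pseudo_complement a p" for a x
    using atom_inf[OF that(1), of x] that(2)
    by (auto simp: comparable_def pseudo_complement_def)
  show ?thesis using bwd fwd comp by blast
qed

end
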